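(* Let $\mathcal{L}$ be a set of graphs. For all graphs $G_1,G_2$: $G_1\cong^{\mathbf{G}}_{\mathcal{L}}G_2$ iff $G_1$ and $G_2$ have the same sort and, for all graphs $G$, all finite permutations $\alpha$ of $\mathbb{S}$ and all finite $\tau\subseteq\mathbb{S}$, $\mathsf{rename}_\alpha(\mathsf{restrict}_\tau(G_1\parallel G))\in\mathcal{L}\iff\mathsf{rename}_\alpha(\mathsf{restrict}_\tau(G_2\parallel G))\in\mathcal{L}$.
   Context: Graphs over a countably infinite set $\mathbb{S}$ of source labels and a set $\mathbb{A}$ of edge labels: isomorphism classes of finite $\mathbb{A}$-labelled hypergraphs with an injective map $\xi$ from a finite sort $\tau\subseteq\mathbb{S}$ into the vertices. The HR algebra $\mathbf{G}$: sorts are finite subsets of $\mathbb{S}$; operations $\mathbf{0}_\tau$ (one $s$-source per $s\in\tau$), $\mathbf{a}_{(s_1,\ldots,s_{\#a})}$ (single $a$-edge on these sources), $\mathsf{restrict}_\tau$ (on sort $\tau'$, removes source labels in $\tau'\setminus\tau$, keeping vertices; result sort $\tau\cap\tau'$), $\mathsf{rename}_\alpha$ ($\alpha$ finite permutation; source map becomes $\xi\circ\alpha$, sort $\alpha^{-1}(\tau)$), $\parallel$ (disjoint union fusing the two $s$-sources for each common label $s$). The syntactic congruence $\cong^{\mathbf{A}}_{\mathcal{L}}$ of a set $\mathcal{L}$ in an algebra $\mathbf{A}$ relates $a,b$ iff they have the same sort and for every first-order term $t(x,y_1,\ldots,y_k)$ over the signature of $\mathbf{A}$ and all elements $c_1,\ldots,c_k$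 of matching sorts, $t^{\mathbf{A}}(a,\bar c)\in\mathcal{L}\iff t^{\mathbf{A}}(b,\bar c)\in\mathcal{L}$. *)

theory Defs
  imports Main
begin

text \<open>Source labels: the countably infinite set S is taken to be nat.
  Concrete graphs have vertices and edges drawn from nat; the elements of
  the HR algebra are isomorphism classes of well-formed concrete graphs.\<close>

record 'a hgraph =
  verts :: "nat set"
  edges :: "nat set"
  lab   :: "nat \<Rightarrow> 'a"
  att   :: "nat \<Rightarrow> nat list"
  srt   :: "nat set"
  src   :: "nat \<Rightarrow> nat"

definition wf_graph :: "('a \<Rightarrow> nat) \<Rightarrow> 'a hgraph \<Rightarrow> bool" where
  "wf_graph ar G \<longleftrightarrow>
     finite (verts G) \<and> finite (edges G) \<and>
     (\<forall>e\<in>edges G. set (att G e) \<subseteq> verts G \<and> length (att G e) = ar (lab G e)) \<and>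
     finite (srt G) \<and> inj_on (src G) (srt G) \<and> src G ` srt G \<subseteq> verts G"

definition iso_graph :: "'a hgraph \<Rightarrow> 'a hgraph \<Rightarrow> bool" where
  "iso_graph G H \<longleftrightarrow> srt G = srt H \<and>
     (\<exists>fv fe. bij_betw fv (verts G) (verts H) \<and> bij_betw fe (edges G) (edges H) \<and>
        (\<forall>e\<in>edges G. lab H (fe e) = lab G e \<and> att H (fe e) = map fv (att G e)) \<and>
        (\<forall>s\<in>srt G. src H s = fv (src G s)))"

definition cls :: "('a \<Rightarrow> nat) \<Rightarrow> 'a hgraph \<Rightarrow> 'a hgraph set" where
  "cls ar G = {H. wf_graph ar H \<and> iso_graph G H}"

definition fin_perm :: "(nat \<Rightarrow> nat) \<Rightarrow> bool" where
  "fin_perm \<alpha> \<longleftrightarrow> bij \<alpha> \<and> finite {s. \<alpha> s \<noteq> s}"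

definition zero_g :: "nat set \<Rightarrow> 'a hgraph" where
  "zero_g \<tau> = \<lparr>verts = \<tau>, edges = {}, lab = (\<lambda>_. undefined), att = (\<lambda>_. []),
               srt = \<tau>, src = id\<rparr>"

definition edge_g :: "'a \<Rightarrow> nat list \<Rightarrow> 'a hgraph" where
  "edge_g a ss = \<lparr>verts = set ss, edges = {0}, lab = (\<lambda>_. a), att = (\<lambda>_. ss),
                  srt = set ss, src = id\<rparr>"

definition restrict_g :: "nat set \<Rightarrow> 'a hgraph \<Rightarrow> 'a hgraph" where
  "restrict_g \<tau> G = G\<lparr>srt := srt G \<inter> \<tau>\<rparr>"

definition rename_g :: "(nat \<Rightarrow> nat) \<Rightarrow> 'a hgraph \<Rightarrow> 'a hgraph" where
  "rename_g \<alpha> G = G\<lparr>srt := \<alpha> -` srt G, src := src G \<circ> \<alpha>\<rparr>"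

text \<open>Parallel composition: G's vertices/edges are encoded as even numbers, H's as odd
  numbers, except that the s-source of H is identified with the s-source of G for every
  common source label s.\<close>
definition par_vmap :: "'a hgraph \<Rightarrow> 'a hgraph \<Rightarrow> nat \<Rightarrow> nat" where
  "par_vmap G H v =
     (if v \<in> src H ` (srt G \<inter> srt H) then 2 * src G (inv_into (srt H) (src H) v)
      else 2 * v + 1)"

definition par_g :: "'a hgraph \<Rightarrow> 'a hgraph \<Rightarrow> 'a hgraph" where
  "par_g G H =
     \<lparr>verts = (\<lambda>v. 2 * v) ` verts G \<union> par_vmap G H ` verts H,
      edges = (\<lambda>e. 2 * e) ` edges G \<union> (\<lambda>e. 2 * e + 1) ` edges H,
      lab = (\<lambda>e. if even e then lab G (e div 2) else lab H (e div 2)),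
      att = (\<lambda>e. if even e then map (\<lambda>v. 2 * v) (att G (e div 2))
                 else map (par_vmap G H) (att H (e div 2))),
      srt = srt G \<union> srt H,
      src = (\<lambda>s. if s \<in> srt G then 2 * src G s else par_vmap G H (src H s))\<rparr>"

datatype 'a hrterm =
    Var nat
  | Zero "nat set"
  | Edge 'a "nat list"
  | Restrict "nat set" "'a hrterm"
  | Rename "nat \<Rightarrow> nat" "'a hrterm"
  | Par "'a hrterm" "'a hrterm"

fun wf_term :: "('a \<Rightarrow> nat) \<Rightarrow> 'a hrterm \<Rightarrow> bool" where
  "wf_term ar (Var i) = True"
| "wf_term ar (Zero \<tau>) = finite \<tau>"
| "wf_term ar (Edge a ss) = (length ss = ar a)"
| "wf_term ar (Restrict \<tau> t) = (finite \<tau> \<and> wf_term ar t)"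
| "wf_term ar (Rename \<alpha> t) = (fin_perm \<alpha> \<and> wf_term ar t)"
| "wf_term ar (Par t u) = (wf_term ar t \<and> wf_term ar u)"

fun eval_term :: "(nat \<Rightarrow> 'a hgraph) \<Rightarrow> 'a hrterm \<Rightarrow> 'a hgraph" where
  "eval_term \<rho> (Var i) = \<rho> i"
| "eval_term \<rho> (Zero \<tau>) = zero_g \<tau>"
| "eval_term \<rho> (Edge a ss) = edge_g a ss"
| "eval_term \<rho> (Restrict \<tau> t) = restrict_g \<tau> (eval_term \<rho> t)"
| "eval_term \<rho> (Rename \<alpha> t) = rename_g \<alpha> (eval_term \<rho> t)"
| "eval_term \<rho> (Par t u) = par_g (eval_term \<rho> t) (eval_term \<rho> u)"

text \<open>Variable 0 plays the role of x; the other variables are the parameters y_i, which are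
  assigned arbitrary graphs (the many-sorted operations are indexed by the argument sorts,
  so every assignment is well-sorted).\<close>
definition synt_cong :: "('a \<Rightarrow> nat) \<Rightarrow> 'a hgraph set set \<Rightarrow> 'a hgraph \<Rightarrow> 'a hgraph \<Rightarrow> bool" where
  "synt_cong ar L G1 G2 \<longleftrightarrow> srt G1 = srt G2 \<and>
     (\<forall>t \<rho>. wf_term ar t \<longrightarrow> (\<forall>i. wf_graph ar (\<rho> i)) \<longrightarrow>
        (cls ar (eval_term (\<rho>(0 := G1)) t) \<in> L \<longleftrightarrow> cls ar (eval_term (\<rho>(0 := G2)) t) \<in> L))"

end

theory Submission
  imports Defs
begin


lemma wf_restrict: "wf_graph ar G \<Longrightarrow> wf_graph ar (restrict_g \<tau> G)"
  unfolding wf_graph_def restrict_g_def by (auto intro: inj_on_subset)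

lemma wf_rename:
  assumes "wf_graph ar G" "bij \<alpha>"
  shows "wf_graph ar (rename_g \<alpha> G)"
proof -
  have "inj \<alpha>" using assms(2) bij_is_inj by blast
  have f: "finite (\<alpha> -` srt G)"
    using assms(1) \<open>inj \<alpha>\<close> unfolding wf_graph_def by (auto intro: finite_vimageI)
  have i: "inj_on (src G \<circ> \<alpha>) (\<alpha> -` srt G)"
    using assms(1) \<open>inj \<alpha>\<close> unfolding wf_graph_def
    by (auto intro!: comp_inj_on inj_on_subset[of \<alpha> UNIV] simp: inj_on_def)
  show ?thesis using assms(1) f i unfolding wf_graph_def rename_g_def by auto
qed

lemma wf_zero: "finite \<tau> \<Longrightarrow> wf_graph ar (zero_g \<tau>)"
  unfolding wf_graph_def zero_g_def by auto

lemma wf_edge: "length ss = ar a \<Longrightarrow> wf_graph ar (edge_g a ss)"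
  unfolding wf_graph_def edge_g_def by auto

lemma iso_restrict: "iso_graph A B \<Longrightarrow> iso_graph (restrict_g \<tau> A) (restrict_g \<tau> B)"
  unfolding iso_graph_def restrict_g_def by simp blast

lemma iso_rename: "iso_graph A B \<Longrightarrow> iso_graph (rename_g \<alpha> A) (rename_g \<alpha> B)"
  unfolding iso_graph_def rename_g_def by simp blast

lemma iso_trans:
  assumes "iso_graph A B" "iso_graph B C"
  shows "iso_graph A C"
proof -
  obtain fv fe where 1: "bij_betw fv (verts A) (verts B)" "bij_betw fe (edges A) (edges B)"
    "\<forall>e\<in>edges A. lab B (fe e) = lab A e \<and> att B (fe e) = map fv (att A e)"
    "\<forall>s\<in>srt A. src B s = fv (src A s)" "srt A = srt B"
    using assms(1) unfolding iso_graph_def by blast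
  obtain gv ge where 2: "bij_betw gv (verts B) (verts C)" "bij_betw ge (edges B) (edges C)"
    "\<forall>e\<in>edges B. lab C (ge e) = lab B e \<and> att C (ge e) = map gv (att B e)"
    "\<forall>s\<in>srt B. src C s = gv (src B s)" "srt B = srt C"
    using assms(2) unfolding iso_graph_def by blast
  have "bij_betw (gv \<circ> fv) (verts A) (verts C)" using 1 2 bij_betw_trans by blast
  moreover have "bij_betw (ge \<circ> fe) (edges A) (edges C)" using 1 2 bij_betw_trans by blast
  moreover have "\<forall>e\<in>edges A. lab C ((ge \<circ> fe) e) = lab A e \<and> att C ((ge \<circ> fe) e) = map (gv \<circ> fv) (att A e)"
  proof
    fix e assume e: "e \<in> edges A"
    then have "fe e \<in> edges B" using 1(2) bij_betwE by blast
    then show "lab C ((ge \<circ> fe) e) = lab A e \<and> att C ((ge \<circ> fe) e) = map (gv \<circ> fv) (att A e)"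
      using 1(3) 2(3) e by simp
  qed
  moreover have "\<forall>s\<in>srt A. src C s = (gv \<circ> fv) (src A s)" using 1(4,5) 2(4) by auto
  ultimately show ?thesis unfolding iso_graph_def using 1(5) 2(5) by blast
qed

lemma iso_sym:
  assumes "iso_graph A B" "wf_graph ar A"
  shows "iso_graph B A"
proof -
  obtain fv fe where 1: "bij_betw fv (verts A) (verts B)" "bij_betw fe (edges A) (edges B)"
    "\<forall>e\<in>edges A. lab B (fe e) = lab A e \<and> att B (fe e) = map fv (att A e)"
    "\<forall>s\<in>srt A. src B s = fv (src A s)" "srt A = srt B"
    using assms(1) unfolding iso_graph_def by blast
  define gv where "gv = inv_into (verts A) fv"
  define ge where "ge = inv_into (edges A) fe"
  have g1: "bij_betw gv (verts B) (verts A)" unfolding gv_def using 1(1) bij_betw_inv_into by blast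
  have g2: "bij_betw ge (edges B) (edges A)" unfolding ge_def using 1(2) bij_betw_inv_into by blast
  have g3: "\<forall>e\<in>edges B. lab A (ge e) = lab B e \<and> att A (ge e) = map gv (att B e)"
  proof
    fix e assume e: "e \<in> edges B"
    then obtain e' where e': "e' \<in> edges A" "e = fe e'" using 1(2) bij_betw_imp_surj_on by blast
    have ge': "ge e = e'" unfolding ge_def e' using 1(2) e'(1) bij_betw_imp_inj_on inv_into_f_f by metis
    have "set (att A e') \<subseteq> verts A" using assms(2) e'(1) unfolding wf_graph_def by blast
    then have "map gv (map fv (att A e')) = att A e'"
    proof -
      have "inj_on fv (verts A)" using 1(1) bij_betw_imp_inj_on by blast
      then show ?thesis unfolding gv_def using \<open>set (att A e') \<subseteq> verts A\<close>
        by (simp add: map_idI subset_iff)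
    qed
    then show "lab A (ge e) = lab B e \<and> att A (ge e) = map gv (att B e)"
      using 1(3) e' ge' by simp
  qed
  have g4: "\<forall>s\<in>srt B. src A s = gv (src B s)"
  proof
    fix s assume "s \<in> srt B"
    then have s: "s \<in> srt A" using 1(5) by simp
    then have "src A s \<in> verts A" using assms(2) unfolding wf_graph_def by blast
    then show "src A s = gv (src B s)" using 1(4) s unfolding gv_def
      using 1(1) bij_betw_imp_inj_on inv_into_f_f by metis
  qed
  show ?thesis unfolding iso_graph_def using g1 g2 g3 g4 1(5) by blast
qed

lemma cls_eq:
  assumes "iso_graph A B" "wf_graph ar A"
  shows "cls ar A = cls ar B"
proof -
  have "iso_graph B A" using iso_sym assms by blast
  then show ?thesis unfolding cls_def using assms(1) iso_trans by blast
qed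



definition glue2 :: "'a hgraph \<Rightarrow> 'a hgraph \<Rightarrow> 'a hgraph \<Rightarrow> (nat\<Rightarrow>nat) \<Rightarrow> (nat\<Rightarrow>nat) \<Rightarrow> (nat\<Rightarrow>nat) \<Rightarrow> (nat\<Rightarrow>nat) \<Rightarrow> bool" where
 "glue2 G H K fG fH eG eH \<longleftrightarrow>
   verts K = fG ` verts G \<union> fH ` verts H \<and> inj_on fG (verts G) \<and> inj_on fH (verts H) \<and>
   (\<forall>v\<in>verts G. \<forall>w\<in>verts H. fG v = fH w \<longleftrightarrow> (\<exists>s\<in>srt G \<inter> srt H. v = src G s \<and> w = src H s)) \<and>
   edges K = eG ` edges G \<union> eH ` edges H \<and> inj_on eG (edges G) \<and> inj_on eH (edges H) \<and>
   eG ` edges G \<inter> eH ` edges H = {} \<and>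
   (\<forall>e\<in>edges G. lab K (eG e) = lab G e \<and> att K (eG e) = map fG (att G e)) \<and>
   (\<forall>e\<in>edges H. lab K (eH e) = lab H e \<and> att K (eH e) = map fH (att H e)) \<and>
   srt K = srt G \<union> srt H \<and>
   (\<forall>s\<in>srt G. src K s = fG (src G s)) \<and> (\<forall>s\<in>srt H. src K s = fH (src H s))"

lemma glue2D:
  assumes "glue2 G H K fG fH eG eH"
  shows "verts K = fG ` verts G \<union> fH ` verts H" "inj_on fG (verts G)" "inj_on fH (verts H)"
   "\<And>v w. v\<in>verts G \<Longrightarrow> w\<in>verts H \<Longrightarrow> fG v = fH w \<longleftrightarrow> (\<exists>s\<in>srt G \<inter> srt H. v = src G s \<and> w = src H s)"
   "edges K = eG ` edges G \<union> eH ` edges H" "inj_on eG (edges G)" "inj_on eH (edges H)"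
   "eG ` edges G \<inter> eH ` edges H = {}"
   "\<And>e. e\<in>edges G \<Longrightarrow> lab K (eG e) = lab G e" "\<And>e. e\<in>edges G \<Longrightarrow> att K (eG e) = map fG (att G e)"
   "\<And>e. e\<in>edges H \<Longrightarrow> lab K (eH e) = lab H e" "\<And>e. e\<in>edges H \<Longrightarrow> att K (eH e) = map fH (att H e)"
   "srt K = srt G \<union> srt H"
   "\<And>s. s\<in>srt G \<Longrightarrow> src K s = fG (src G s)" "\<And>s. s\<in>srt H \<Longrightarrow> src K s = fH (src H s)"
  using assms unfolding glue2_def by simp_all

lemma glue2_sym:
  assumes a: "glue2 G H K fG fH eG eH" shows "glue2 H G K fH fG eH eG"
proof -
  note g = glue2D[OF a]
  have "\<forall>v\<in>verts H. \<forall>w\<in>verts G. fH v = fG w \<longleftrightarrow> (\<exists>s\<in>srt H \<inter> srt G. v = src H s \<and> w = src G s)"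
    using g(4) by (metis Int_commute)
  then show ?thesis unfolding glue2_def using g by (simp add: Un_commute Int_commute)
qed

lemma wfD:
  assumes "wf_graph ar G"
  shows "finite (verts G)" "finite (edges G)" "\<And>e. e \<in> edges G \<Longrightarrow> set (att G e) \<subseteq> verts G"
    "\<And>e. e \<in> edges G \<Longrightarrow> length (att G e) = ar (lab G e)" "finite (srt G)" "inj_on (src G) (srt G)"
    "\<And>s. s \<in> srt G \<Longrightarrow> src G s \<in> verts G"
  using assms unfolding wf_graph_def by auto

definition cp :: "nat set \<Rightarrow> nat set \<Rightarrow> (nat\<Rightarrow>nat) \<Rightarrow> (nat\<Rightarrow>nat) \<Rightarrow> (nat\<Rightarrow>nat) \<Rightarrow> (nat\<Rightarrow>nat) \<Rightarrow> nat \<Rightarrow> nat" where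
  "cp VX VH iX iH uX uH k = (if k \<in> iX ` VX then uX (inv_into VX iX k) else uH (inv_into VH iH k))"

lemma cp1: "inj_on iX VX \<Longrightarrow> x \<in> VX \<Longrightarrow> cp VX VH iX iH uX uH (iX x) = uX x"
  unfolding cp_def by simp

lemma cp2:
  assumes "inj_on iH VH" "h \<in> VH" "inj_on iX VX" "\<And>x. x\<in>VX \<Longrightarrow> iX x = iH h \<Longrightarrow> uX x = uH h"
  shows "cp VX VH iX iH uX uH (iH h) = uH h"
proof (cases "iH h \<in> iX ` VX")
  case True
  then obtain x where x: "x \<in> VX" "iH h = iX x" by blast
  then show ?thesis unfolding cp_def using assms by simp
next
  case False
  then show ?thesis unfolding cp_def using assms by simp
qed

lemma wf_glue:
  assumes g: "glue2 G H K fG fH eG eH" and wG: "wf_graph ar G" and wH: "wf_graph ar H"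
  shows "wf_graph ar K"
proof -
  note g = glue2D[OF g] and wG = wfD[OF wG] and wH = wfD[OF wH]
  have 1: "finite (verts K)" "finite (edges K)" "finite (srt K)" using g wG wH by auto
  have 2: "\<forall>e\<in>edges K. set (att K e) \<subseteq> verts K \<and> length (att K e) = ar (lab K e)"
  proof
    fix e assume "e \<in> edges K"
    then consider e' where "e' \<in> edges G" "e = eG e'" | e' where "e' \<in> edges H" "e = eH e'"
      using g(5) by blast
    then show "set (att K e) \<subseteq> verts K \<and> length (att K e) = ar (lab K e)"
    proof cases
      case 1
      then have "set (att G e') \<subseteq> verts G" using wG(3) by blast
      then have "set (att K e) \<subseteq> fG ` verts G" using 1 g(10) by auto
      then show ?thesis using 1 g(1,9,10) wG(4) by auto
    next
      case 2
      then have "set (att H e') \<subseteq> verts H" using wH(3) by blast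
      then have "set (att K e) \<subseteq> fH ` verts H" using 2 g(12) by auto
      then show ?thesis using 2 g(1,11,12) wH(4) by auto
    qed
  qed
  have 3: "inj_on (src K) (srt K)"
  proof (rule inj_onI)
    fix s t assume s: "s \<in> srt K" and t: "t \<in> srt K" and st: "src K s = src K t"
    have A: "s = t" if st1: "s \<in> srt G" "t \<in> srt H" "src K s = src K t" for s t
    proof -
      have "fG (src G s) = fH (src H t)" using st1 g(14,15) by simp
      then obtain r where "r \<in> srt G \<inter> srt H" "src G s = src G r" "src H t = src H r"
        using g(4)[OF wG(7)[OF st1(1)] wH(7)[OF st1(2)]] by blast
      then show ?thesis using wG(6) wH(6) st1 by (metis IntD1 IntD2 inj_onD)
    qed
    show "s = t"
    proof -
      { assume "s \<in> srt G" "t \<in> srt G"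
        then have ?thesis using st g(14) g(2) wG(6,7) by (metis inj_onD) }
      moreover
      { assume "s \<in> srt H" "t \<in> srt H"
        then have ?thesis using st g(15) g(3) wH(6,7) by (metis inj_onD) }
      moreover
      { assume "s \<in> srt G" "t \<in> srt H"
        then have ?thesis using A st by blast }
      moreover
      { assume "s \<in> srt H" "t \<in> srt G"
        then have ?thesis using A st by metis }
      ultimately show ?thesis using s t g(13) by blast
    qed
  qed
  have 4: "src K ` srt K \<subseteq> verts K" using g(1,13,14,15) wG(7) wH(7) by auto
  show ?thesis unfolding wf_graph_def using 1 2 3 4 by blast
qed

lemma glue2_par:
  assumes wG: "wf_graph ar G" and wH: "wf_graph ar H"
  shows "glue2 G H (par_g G H) (\<lambda>v. 2*v) (par_vmap G H) (\<lambda>e. 2*e) (\<lambda>e. 2*e+1)"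
proof -
  note wG = wfD[OF wG] and wH = wfD[OF wH]
  let ?F = "src H ` (srt G \<inter> srt H)"
  have neq: "2*a \<noteq> 2*b+(1::nat)" for a b by presburger
  have pv1: "par_vmap G H (src H s) = 2 * src G s" if "s \<in> srt G \<inter> srt H" for s
  proof -
    have "inv_into (srt H) (src H) (src H s) = s" using wH(6) that by simp
    then show ?thesis unfolding par_vmap_def using that by simp
  qed
  have pv2: "par_vmap G H w = 2*w+1" if "w \<notin> ?F" for w
    unfolding par_vmap_def using that by simp
  have fus: "2*v = par_vmap G H w \<longleftrightarrow> (\<exists>s\<in>srt G \<inter> srt H. v = src G s \<and> w = src H s)"
    if "v \<in> verts G" "w \<in> verts H" for v w
  proof (cases "w \<in> ?F")
    case True
    then obtain s where s: "s \<in> srt G \<inter> srt H" "w = src H s" by blast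
    have "(\<exists>s\<in>srt G \<inter> srt H. v = src G s \<and> w = src H s) \<longleftrightarrow> v = src G s"
      using s wH(6) by (auto dest: inj_onD)
    then show ?thesis using pv1 s by simp
  next
    case False
    then have "\<not>(\<exists>s\<in>srt G \<inter> srt H. v = src G s \<and> w = src H s)" by blast
    then show ?thesis using pv2[OF False] neq by simp
  qed
  have inj: "inj_on (par_vmap G H) (verts H)"
  proof (rule inj_onI)
    fix v w assume v: "v \<in> verts H" and w: "w \<in> verts H" and e: "par_vmap G H v = par_vmap G H w"
    show "v = w"
    proof (cases "v \<in> ?F"; cases "w \<in> ?F")
      assume "v \<in> ?F" "w \<in> ?F"
      then obtain s t where "s \<in> srt G \<inter> srt H" "v = src H s" "t \<in> srt G \<inter> srt H" "w = src H t" by blast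
      then show ?thesis using e pv1 wG(6) by (auto dest: inj_onD)
    next
      assume "v \<in> ?F" "w \<notin> ?F"
      then obtain s where "s \<in> srt G \<inter> srt H" "v = src H s" by blast
      then show ?thesis using e pv1 pv2 \<open>w \<notin> ?F\<close> neq by simp
    next
      assume "v \<notin> ?F" "w \<in> ?F"
      then obtain s where "s \<in> srt G \<inter> srt H" "w = src H s" by blast
      then show ?thesis using e pv1 pv2 \<open>v \<notin> ?F\<close> neq by (metis)
    next
      assume "v \<notin> ?F" "w \<notin> ?F"
      then show ?thesis using e pv2 by simp
    qed
  qed
  have srcH: "src (par_g G H) s = par_vmap G H (src H s)" if "s \<in> srt H" for s
  proof (cases "s \<in> srt G")
    case True then show ?thesis using pv1 that unfolding par_g_def by simp
  next
    case False then show ?thesis using that unfolding par_g_def by simp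
  qed
  have ev: "inj_on (\<lambda>v::nat. 2*v) X" for X by (auto simp: inj_on_def)
  have od: "inj_on (\<lambda>v::nat. 2*v+1) X" for X by (auto simp: inj_on_def)
  have dj: "(\<lambda>e::nat. 2*e) ` X \<inter> (\<lambda>e. 2*e+1) ` Y = {}" for X Y using neq by blast
  have la: "lab (par_g G H) (2*e) = lab G e \<and> att (par_g G H) (2*e) = map (\<lambda>v. 2*v) (att G e)" for e
    unfolding par_g_def by simp
  have lb: "lab (par_g G H) (2*e+1) = lab H e \<and> att (par_g G H) (2*e+1) = map (par_vmap G H) (att H e)" for e
    unfolding par_g_def by simp
  have sr: "srt (par_g G H) = srt G \<union> srt H" "verts (par_g G H) = (\<lambda>v. 2*v) ` verts G \<union> par_vmap G H ` verts H"
    "edges (par_g G H) = (\<lambda>e. 2*e) ` edges G \<union> (\<lambda>e. 2*e+1) ` edges H"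
    unfolding par_g_def by simp_all
  have sg: "src (par_g G H) s = 2 * src G s" if "s \<in> srt G" for s using that unfolding par_g_def by simp
  show ?thesis unfolding glue2_def
    apply (intro conjI ballI)
    using fus inj srcH ev od dj la lb sr sg by simp_all
qed



lemma glue2_iso:
  assumes g: "glue2 G H K fG fH eG eH" and g': "glue2 G H K' fG' fH' eG' eH'"
    and wG: "wf_graph ar G" and wH: "wf_graph ar H"
  shows "iso_graph K K'"
proof -
  note g = glue2D[OF g] and g' = glue2D[OF g'] and wG = wfD[OF wG] and wH = wfD[OF wH]
  define fv where "fv = cp (verts G) (verts H) fG fH fG' fH'"
  define fe where "fe = cp (edges G) (edges H) eG eH eG' eH'"
  have fv1: "fv (fG v) = fG' v" if "v \<in> verts G" for v
    unfolding fv_def using cp1 g(2) that by metis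
  have fv2: "fv (fH w) = fH' w" if w: "w \<in> verts H" for w
    unfolding fv_def
  proof (rule cp2[OF g(3) w g(2)])
    fix v assume v: "v \<in> verts G" and e: "fG v = fH w"
    then obtain s where s: "s \<in> srt G \<inter> srt H" "v = src G s" "w = src H s" using g(4) w by blast
    then show "fG' v = fH' w" using g'(14,15) by (metis IntD1 IntD2)
  qed
  have fe1: "fe (eG e) = eG' e" if "e \<in> edges G" for e
    unfolding fe_def using cp1 g(6) that by metis
  have fe2: "fe (eH e) = eH' e" if w: "e \<in> edges H" for e
    unfolding fe_def
    by (rule cp2[OF g(7) w g(6)]) (use g(8) w in blast)
  have bv: "bij_betw fv (verts K) (verts K')"
    unfolding bij_betw_def
  proof
    have "fv ` verts K = (fv \<circ> fG) ` verts G \<union> (fv \<circ> fH) ` verts H" using g(1) by (simp add: image_Un image_comp)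
    also have "\<dots> = verts K'" using g'(1) fv1 fv2 by (simp cong: image_cong)
    finally show "fv ` verts K = verts K'" .
    show "inj_on fv (verts K)"
    proof (rule inj_onI)
      fix a b assume a: "a \<in> verts K" and b: "b \<in> verts K" and ab: "fv a = fv b"
      have X: "fG v = fH w" if vw: "v \<in> verts G" "w \<in> verts H" "fv (fG v) = fv (fH w)" for v w
      proof -
        have "fG' v = fH' w" using vw fv1 fv2 by simp
        then obtain s where s: "s \<in> srt G \<inter> srt H" "v = src G s" "w = src H s" using g'(4)[OF vw(1,2)] by blast
        then show ?thesis using g(14,15) by (metis IntD1 IntD2)
      qed
      show "a = b"
        using a b ab g(1) X fv1 fv2 g'(2,3) g(2,3) by (auto dest: inj_onD)
    qed
  qed
  have be: "bij_betw fe (edges K) (edges K')"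
    unfolding bij_betw_def
  proof
    have "fe ` edges K = (fe \<circ> eG) ` edges G \<union> (fe \<circ> eH) ` edges H" using g(5) by (simp add: image_Un image_comp)
    also have "\<dots> = edges K'" using g'(5) fe1 fe2 by (simp cong: image_cong)
    finally show "fe ` edges K = edges K'" .
    show "inj_on fe (edges K)"
    proof (rule inj_onI)
      fix a b assume a: "a \<in> edges K" and b: "b \<in> edges K" and ab: "fe a = fe b"
      show "a = b"
        using a b ab g(5) fe1 fe2 g'(6,7,8) by (auto dest: inj_onD) (metis disjoint_iff imageI)
    qed
  qed
  have la: "\<forall>e\<in>edges K. lab K' (fe e) = lab K e \<and> att K' (fe e) = map fv (att K e)"
  proof
    fix e assume "e \<in> edges K"
    then consider e' where "e' \<in> edges G" "e = eG e'" | e' where "e' \<in> edges H" "e = eH e'"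
      using g(5) by blast
    then show "lab K' (fe e) = lab K e \<and> att K' (fe e) = map fv (att K e)"
    proof cases
      case 1
      then have "set (att G e') \<subseteq> verts G" using wG(3) by blast
      then have "map fv (map fG (att G e')) = map fG' (att G e')" using fv1 by (auto simp: subset_iff)
      then show ?thesis using 1 g(9,10) g'(9,10) fe1 by simp
    next
      case 2
      then have "set (att H e') \<subseteq> verts H" using wH(3) by blast
      then have "map fv (map fH (att H e')) = map fH' (att H e')" using fv2 by (auto simp: subset_iff)
      then show ?thesis using 2 g(11,12) g'(11,12) fe2 by simp
    qed
  qed
  have ss: "\<forall>s\<in>srt K. src K' s = fv (src K s)"
    using g(13,14,15) g'(14,15) fv1 fv2 wG(7) wH(7) by auto
  show ?thesis unfolding iso_graph_def using bv be la ss g(13) g'(13) by blast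
qed



lemma rename_simps[simp]: "verts (rename_g \<beta> X) = verts X" "edges (rename_g \<beta> X) = edges X"
  "lab (rename_g \<beta> X) = lab X" "att (rename_g \<beta> X) = att X"
  "srt (rename_g \<beta> X) = \<beta> -` srt X" "src (rename_g \<beta> X) = src X \<circ> \<beta>"
  unfolding rename_g_def by simp_all

lemma restrict_simps[simp]: "verts (restrict_g \<sigma> X) = verts X" "edges (restrict_g \<sigma> X) = edges X"
  "lab (restrict_g \<sigma> X) = lab X" "att (restrict_g \<sigma> X) = att X"
  "srt (restrict_g \<sigma> X) = srt X \<inter> \<sigma>" "src (restrict_g \<sigma> X) = src X"
  unfolding restrict_g_def by simp_all

lemma glue2_rename:
  assumes g: "glue2 A B P fA fB eA eB" and b: "bij \<beta>"
  shows "glue2 (rename_g \<beta> A) (rename_g \<beta> B) (rename_g \<beta> P) fA fB eA eB"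
proof -
  note g = glue2D[OF g]
  have fus: "(\<exists>s\<in>srt A \<inter> srt B. v = src A s \<and> w = src B s) \<longleftrightarrow>
         (\<exists>s\<in>\<beta> -` srt A \<inter> \<beta> -` srt B. v = src A (\<beta> s) \<and> w = src B (\<beta> s))" for v w
  proof
    assume "\<exists>s\<in>srt A \<inter> srt B. v = src A s \<and> w = src B s"
    then obtain s where s: "s \<in> srt A \<inter> srt B" "v = src A s" "w = src B s" by blast
    obtain t where "s = \<beta> t" using b by (metis bij_pointE)
    then show "\<exists>s\<in>\<beta> -` srt A \<inter> \<beta> -` srt B. v = src A (\<beta> s) \<and> w = src B (\<beta> s)" using s by auto
  qed auto
  show ?thesis unfolding glue2_def
    apply (intro conjI ballI)
    using g fus by auto
qed

lemma glue2_restr: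
  assumes g: "glue2 A (rename_g \<beta> B) P fA fB eA eB" and inv: "\<And>s. \<beta> (\<beta> s) = s"
    and fx: "\<And>s. s \<in> srt A \<Longrightarrow> s \<in> \<sigma> \<Longrightarrow> \<beta> s = s"
    and cnd: "\<And>s. s \<in> srt A \<Longrightarrow> \<beta> s \<in> srt B \<longleftrightarrow> s \<in> \<sigma> \<and> s \<in> srt B"
  shows "glue2 (restrict_g \<sigma> A) B (rename_g \<beta> (restrict_g ((srt A \<inter> \<sigma>) \<union> \<beta> -` srt B) P)) fA fB eA eB"
proof -
  note g = glue2D[OF g]
  let ?K = "rename_g \<beta> (restrict_g ((srt A \<inter> \<sigma>) \<union> \<beta> -` srt B) P)"
  have srtB: "srt (rename_g \<beta> B) = \<beta> -` srt B" "src (rename_g \<beta> B) = src B \<circ> \<beta>"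
    "verts (rename_g \<beta> B) = verts B" "edges (rename_g \<beta> B) = edges B"
    "lab (rename_g \<beta> B) = lab B" "att (rename_g \<beta> B) = att B"
    unfolding rename_g_def by simp_all
  have K: "verts ?K = verts P" "edges ?K = edges P" "lab ?K = lab P" "att ?K = att P"
    "srt ?K = \<beta> -` (srt P \<inter> ((srt A \<inter> \<sigma>) \<union> \<beta> -` srt B))" "src ?K = src P \<circ> \<beta>"
    "srt (restrict_g \<sigma> A) = srt A \<inter> \<sigma>" "src (restrict_g \<sigma> A) = src A"
    "verts (restrict_g \<sigma> A) = verts A" "edges (restrict_g \<sigma> A) = edges A"
    "lab (restrict_g \<sigma> A) = lab A" "att (restrict_g \<sigma> A) = att A"
    unfolding rename_g_def restrict_g_def by simp_all
  have s1: "srt ?K = (srt A \<inter> \<sigma>) \<union> srt B"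
  proof
    show "srt ?K \<subseteq> (srt A \<inter> \<sigma>) \<union> srt B"
    proof
      fix s assume "s \<in> srt ?K"
      then have "\<beta> s \<in> srt P" "\<beta> s \<in> (srt A \<inter> \<sigma>) \<union> \<beta> -` srt B" using K(5) by auto
      then show "s \<in> (srt A \<inter> \<sigma>) \<union> srt B" using fx inv by (metis IntE UnE UnI1 UnI2 IntI vimageE)
    qed
    show "(srt A \<inter> \<sigma>) \<union> srt B \<subseteq> srt ?K"
    proof
      fix s assume s: "s \<in> (srt A \<inter> \<sigma>) \<union> srt B"
      then have "\<beta> s \<in> srt P \<and> \<beta> s \<in> (srt A \<inter> \<sigma>) \<union> \<beta> -` srt B"
        using fx inv g(13) srtB(1) by auto
      then show "s \<in> srt ?K" using K(5) by simp
    qed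
  qed
  have fus: "(\<exists>s\<in>srt A \<inter> \<beta> -` srt B. v = src A s \<and> w = src B (\<beta> s)) \<longleftrightarrow>
         (\<exists>s\<in>(srt A \<inter> \<sigma>) \<inter> srt B. v = src A s \<and> w = src B s)" for v w
  proof
    assume "\<exists>s\<in>srt A \<inter> \<beta> -` srt B. v = src A s \<and> w = src B (\<beta> s)"
    then obtain s where s: "s \<in> srt A" "\<beta> s \<in> srt B" "v = src A s" "w = src B (\<beta> s)" by blast
    then have "s \<in> \<sigma>" "s \<in> srt B" using cnd by auto
    then show "\<exists>s\<in>(srt A \<inter> \<sigma>) \<inter> srt B. v = src A s \<and> w = src B s" using s fx by auto
  next
    assume "\<exists>s\<in>(srt A \<inter> \<sigma>) \<inter> srt B. v = src A s \<and> w = src B s"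
    then obtain s where s: "s \<in> srt A" "s \<in> \<sigma>" "s \<in> srt B" "v = src A s" "w = src B s" by blast
    then show "\<exists>s\<in>srt A \<inter> \<beta> -` srt B. v = src A s \<and> w = src B (\<beta> s)" using fx by auto
  qed
  have srcA: "src ?K s = fA (src A s)" if "s \<in> srt A \<inter> \<sigma>" for s
    using that fx g(14) K(6) by simp
  have srcB: "src ?K s = fB (src B s)" if "s \<in> srt B" for s
  proof -
    have "\<beta> s \<in> srt (rename_g \<beta> B)" using that inv srtB(1) by simp
    then have "src P (\<beta> s) = fB (src B (\<beta> (\<beta> s)))" using g(15) srtB(2) by simp
    then show ?thesis using K(6) inv by simp
  qed
  show ?thesis unfolding glue2_def
    apply (intro conjI ballI)
    using g fus srtB K s1 srcA srcB by auto
qed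



lemma glue_src:
  assumes g: "glue2 H G P kH kG cH cG" and wH: "wf_graph ar H" and wG: "wf_graph ar G"
    and s: "s \<in> srt P" and h: "h \<in> verts H"
  shows "kH h = src P s \<longleftrightarrow> s \<in> srt H \<and> h = src H s"
proof (cases "s \<in> srt H")
  case True
  then have "src P s = kH (src H s)" using glue2D(14)[OF g] by simp
  then show ?thesis using True glue2D(2)[OF g] wfD(7)[OF wH True] h by (auto dest: inj_onD)
next
  case False
  then have sG: "s \<in> srt G" using s glue2D(13)[OF g] by auto
  then have e: "src P s = kG (src G s)" using glue2D(15)[OF g] by simp
  have "kH h \<noteq> kG (src G s)"
  proof
    assume "kH h = kG (src G s)"
    then obtain r where r: "r \<in> srt H \<inter> srt G" "src G s = src G r"
      using glue2D(4)[OF g h wfD(7)[OF wG sG]] by blast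
    then have "s = r" using wfD(6)[OF wG] sG by (auto dest: inj_onD)
    then show False using r False by simp
  qed
  then show ?thesis using e False by simp
qed

lemma glue_assoc:
  assumes wX: "wf_graph ar X" and wH: "wf_graph ar H" and wG: "wf_graph ar G"
    and g1: "glue2 X P K jX jP dX dP"
    and g2: "glue2 H G P kH kG cH cG"
    and g3: "glue2 X H A iX iH bX bH"
  shows "glue2 A G K (cp (verts X) (verts H) iX iH jX (jP \<circ> kH)) (jP \<circ> kG)
            (cp (edges X) (edges H) bX bH dX (dP \<circ> cH)) (dP \<circ> cG)"
proof -
  define u where "u = cp (verts X) (verts H) iX iH jX (jP \<circ> kH)"
  define ue where "ue = cp (edges X) (edges H) bX bH dX (dP \<circ> cH)"
  note G1 = glue2D[OF g1] and G2 = glue2D[OF g2] and G3 = glue2D[OF g3]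
  note WX = wfD[OF wX] and WH = wfD[OF wH] and WG = wfD[OF wG]
  have kHP: "kH h \<in> verts P" if "h \<in> verts H" for h using that G2(1) by auto
  have kGP: "kG g \<in> verts P" if "g \<in> verts G" for g using that G2(1) by auto
  have cHP: "cH e \<in> edges P" if "e \<in> edges H" for e using that G2(5) by auto
  have cGP: "cG e \<in> edges P" if "e \<in> edges G" for e using that G2(5) by auto
  have gsH: "kH h = src P s \<longleftrightarrow> s \<in> srt H \<and> h = src H s" if "s \<in> srt P" "h \<in> verts H" for s h
    using glue_src[OF g2 wH wG that] .
  have gsG: "kG g = src P s \<longleftrightarrow> s \<in> srt G \<and> g = src G s" if "s \<in> srt P" "g \<in> verts G" for s g
    using glue_src[OF glue2_sym[OF g2] wG wH that] .
  have asX: "iX x = src A s \<longleftrightarrow> s \<in> srt X \<and> x = src X s" if "s \<in> srt A" "x \<in> verts X" for s x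
    using glue_src[OF g3 wX wH that] .
  have asH: "iH h = src A s \<longleftrightarrow> s \<in> srt H \<and> h = src H s" if "s \<in> srt A" "h \<in> verts H" for s h
    using glue_src[OF glue2_sym[OF g3] wH wX that] .
  have F1: "jX x = jP (kH h) \<longleftrightarrow> (\<exists>s\<in>srt X \<inter> srt H. x = src X s \<and> h = src H s)"
    if x: "x \<in> verts X" and h: "h \<in> verts H" for x h
  proof -
    have "jX x = jP (kH h) \<longleftrightarrow> (\<exists>s\<in>srt X \<inter> srt P. x = src X s \<and> kH h = src P s)"
      using G1(4)[OF x kHP[OF h]] .
    also have "\<dots> \<longleftrightarrow> (\<exists>s\<in>srt X \<inter> srt P. x = src X s \<and> s \<in> srt H \<and> h = src H s)"
      using gsH h by auto
    also have "\<dots> \<longleftrightarrow> (\<exists>s\<in>srt X \<inter> srt H. x = src X s \<and> h = src H s)"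
      using G2(13) by auto
    finally show ?thesis .
  qed
  have F2: "jX x = jP (kG g) \<longleftrightarrow> (\<exists>s\<in>srt X \<inter> srt G. x = src X s \<and> g = src G s)"
    if x: "x \<in> verts X" and g: "g \<in> verts G" for x g
  proof -
    have "jX x = jP (kG g) \<longleftrightarrow> (\<exists>s\<in>srt X \<inter> srt P. x = src X s \<and> kG g = src P s)"
      using G1(4)[OF x kGP[OF g]] .
    also have "\<dots> \<longleftrightarrow> (\<exists>s\<in>srt X \<inter> srt P. x = src X s \<and> s \<in> srt G \<and> g = src G s)"
      using gsG g by auto
    also have "\<dots> \<longleftrightarrow> (\<exists>s\<in>srt X \<inter> srt G. x = src X s \<and> g = src G s)"
      using G2(13) by auto
    finally show ?thesis .
  qed
  have F3: "jP (kH h) = jP (kG g) \<longleftrightarrow> (\<exists>s\<in>srt H \<inter> srt G. h = src H s \<and> g = src G s)"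
    if h: "h \<in> verts H" and g: "g \<in> verts G" for h g
  proof -
    have "jP (kH h) = jP (kG g) \<longleftrightarrow> kH h = kG g"
      using G1(3) kHP[OF h] kGP[OF g] by (auto dest: inj_onD)
    then show ?thesis using G2(4)[OF h g] by simp
  qed
  have U1: "u (iX x) = jX x" if "x \<in> verts X" for x
    unfolding u_def using cp1[OF G3(2) that] .
  have U2': "u (iH h) = (jP \<circ> kH) h" if h: "h \<in> verts H" for h
    unfolding u_def
  proof (rule cp2[OF G3(3) h G3(2)])
    fix x assume x: "x \<in> verts X" and e: "iX x = iH h"
    then show "jX x = (jP \<circ> kH) h" using G3(4)[OF x h] F1[OF x h] by simp
  qed
  have U2: "u (iH h) = jP (kH h)" if h: "h \<in> verts H" for h using U2'[OF h] by simp
  have UE1: "ue (bX e) = dX e" if "e \<in> edges X" for e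
    unfolding ue_def using cp1[OF G3(6) that] .
  have UE2': "ue (bH e) = (dP \<circ> cH) e" if h: "e \<in> edges H" for e
    unfolding ue_def
    by (rule cp2[OF G3(7) h G3(6)]) (use G3(8) h in blast)
  have UE2: "ue (bH e) = dP (cH e)" if h: "e \<in> edges H" for e using UE2'[OF h] by simp
  have a: "verts K = u ` verts A \<union> (jP \<circ> kG) ` verts G"
  proof -
    have "u ` verts A = (u \<circ> iX) ` verts X \<union> (u \<circ> iH) ` verts H"
      using G3(1) by (simp add: image_Un image_comp)
    also have "\<dots> = jX ` verts X \<union> (jP \<circ> kH) ` verts H" using U1 U2 by (simp cong: image_cong)
    finally show ?thesis using G1(1) G2(1) by (auto simp: image_Un image_comp)
  qed
  have b: "inj_on u (verts A)"
  proof (rule inj_onI)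
    fix a b assume a: "a \<in> verts A" and b: "b \<in> verts A" and ab: "u a = u b"
    have M: "iX x = iH h" if x: "x \<in> verts X" and h: "h \<in> verts H" and e: "u (iX x) = u (iH h)" for x h
      using e U1[OF x] U2[OF h] F1[OF x h] G3(4)[OF x h] by simp
    have HH: "h1 = h2" if "h1 \<in> verts H" "h2 \<in> verts H" "jP (kH h1) = jP (kH h2)" for h1 h2
      using that G1(3) G2(2) kHP by (meson inj_onD)
    show "a = b"
      using a b ab G3(1) M U1 U2 HH G1(2) by (auto dest: inj_onD) (metis)+
  qed
  have c: "inj_on (jP \<circ> kG) (verts G)"
    using G1(3) G2(3) kGP by (auto intro!: comp_inj_on simp: inj_on_def)
  have d: "\<forall>a\<in>verts A. \<forall>g\<in>verts G. u a = (jP \<circ> kG) g \<longleftrightarrow> (\<exists>s\<in>srt A \<inter> srt G. a = src A s \<and> g = src G s)"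
  proof (intro ballI)
    fix a g assume a: "a \<in> verts A" and g: "g \<in> verts G"
    from a consider x where "x \<in> verts X" "a = iX x" | h where "h \<in> verts H" "a = iH h"
      using G3(1) by blast
    then show "u a = (jP \<circ> kG) g \<longleftrightarrow> (\<exists>s\<in>srt A \<inter> srt G. a = src A s \<and> g = src G s)"
    proof cases
      case 1
      have "(\<exists>s\<in>srt A \<inter> srt G. a = src A s \<and> g = src G s) \<longleftrightarrow>
            (\<exists>s\<in>srt A \<inter> srt G. s \<in> srt X \<and> x = src X s \<and> g = src G s)"
        using asX 1 by (metis IntD1)
      also have "\<dots> \<longleftrightarrow> (\<exists>s\<in>srt X \<inter> srt G. x = src X s \<and> g = src G s)"
        using G3(13) by auto
      finally show ?thesis using F2[OF 1(1) g] U1[OF 1(1)] 1(2) by simp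
    next
      case 2
      have "(\<exists>s\<in>srt A \<inter> srt G. a = src A s \<and> g = src G s) \<longleftrightarrow>
            (\<exists>s\<in>srt A \<inter> srt G. s \<in> srt H \<and> h = src H s \<and> g = src G s)"
        using asH 2 by (metis IntD1)
      also have "\<dots> \<longleftrightarrow> (\<exists>s\<in>srt H \<inter> srt G. h = src H s \<and> g = src G s)"
        using G3(13) by auto
      finally show ?thesis using F3[OF 2(1) g] U2[OF 2(1)] 2(2) by simp
    qed
  qed
  have e: "edges K = ue ` edges A \<union> (dP \<circ> cG) ` edges G"
  proof -
    have "ue ` edges A = (ue \<circ> bX) ` edges X \<union> (ue \<circ> bH) ` edges H"
      using G3(5) by (simp add: image_Un image_comp)
    also have "\<dots> = dX ` edges X \<union> (dP \<circ> cH) ` edges H" using UE1 UE2 by (simp cong: image_cong)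
    finally show ?thesis using G1(5) G2(5) by (auto simp: image_Un image_comp)
  qed
  have dj1: "dX e \<noteq> dP p" if "e \<in> edges X" "p \<in> edges P" for e p
    using G1(8) that by blast
  have f: "inj_on ue (edges A)"
  proof (rule inj_onI)
    fix a b assume a: "a \<in> edges A" and b: "b \<in> edges A" and ab: "ue a = ue b"
    have HH: "h1 = h2" if "h1 \<in> edges H" "h2 \<in> edges H" "dP (cH h1) = dP (cH h2)" for h1 h2
      using that G1(7) G2(6) cHP by (meson inj_onD)
    show "a = b"
      using a b ab G3(5) UE1 UE2 HH G1(6) dj1 cHP by (auto dest: inj_onD) (metis)+
  qed
  have g: "inj_on (dP \<circ> cG) (edges G)"
    using G1(7) G2(7) cGP by (auto intro!: comp_inj_on simp: inj_on_def)
  have h: "ue ` edges A \<inter> (dP \<circ> cG) ` edges G = {}"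
  proof -
    have "ue ` edges A = dX ` edges X \<union> (dP \<circ> cH) ` edges H"
      using G3(5) UE1 UE2 by (auto simp: image_Un image_comp cong: image_cong)
    moreover have "dP (cH e1) \<noteq> dP (cG e2)" if "e1 \<in> edges H" "e2 \<in> edges G" for e1 e2
    proof
      assume "dP (cH e1) = dP (cG e2)"
      then have "cH e1 = cG e2" using G1(7) cHP cGP that by (auto dest: inj_onD)
      then show False using G2(8) that by blast
    qed
    ultimately show ?thesis using dj1 cGP by auto (metis)+
  qed
  have i: "\<forall>e\<in>edges A. lab K (ue e) = lab A e \<and> att K (ue e) = map u (att A e)"
  proof
    fix e assume "e \<in> edges A"
    then consider e' where "e' \<in> edges X" "e = bX e'" | e' where "e' \<in> edges H" "e = bH e'"
      using G3(5) by blast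
    then show "lab K (ue e) = lab A e \<and> att K (ue e) = map u (att A e)"
    proof cases
      case 1
      then have "set (att X e') \<subseteq> verts X" using WX(3) by blast
      then have "map u (map iX (att X e')) = map jX (att X e')" using U1 by (auto simp: subset_iff)
      then show ?thesis using 1 G1(9,10) G3(9,10) UE1 by simp
    next
      case 2
      then have "set (att H e') \<subseteq> verts H" using WH(3) by blast
      then have "map u (map iH (att H e')) = map (jP \<circ> kH) (att H e')" using U2 by (auto simp: subset_iff)
      then show ?thesis using 2 G1(11,12) G2(9,10) G3(11,12) UE2 cHP by simp
    qed
  qed
  have j: "\<forall>e\<in>edges G. lab K ((dP \<circ> cG) e) = lab G e \<and> att K ((dP \<circ> cG) e) = map (jP \<circ> kG) (att G e)"
    using G1(11,12) G2(11,12) cGP by simp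
  have k: "srt K = srt A \<union> srt G" using G1(13) G2(13) G3(13) by auto
  have l: "\<forall>s\<in>srt A. src K s = u (src A s)"
  proof
    fix s assume "s \<in> srt A"
    then consider "s \<in> srt X" | "s \<in> srt H" using G3(13) by blast
    then show "src K s = u (src A s)"
    proof cases
      case 1 then show ?thesis using G1(14) G3(14) U1 WX(7) by simp
    next
      case 2
      then have "s \<in> srt P" using G2(13) by simp
      then show ?thesis using 2 G1(15) G2(14) G3(15) U2 WH(7) by simp
    qed
  qed
  have m: "\<forall>s\<in>srt G. src K s = (jP \<circ> kG) (src G s)"
    using G1(15) G2(13,15) by simp
  show ?thesis unfolding glue2_def u_def[symmetric] ue_def[symmetric]
    using a b c d e f g h i j k l m by blast
qed



lemma wf_par: "wf_graph ar G \<Longrightarrow> wf_graph ar H \<Longrightarrow> wf_graph ar (par_g G H)"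
  using wf_glue glue2_par by blast

lemma fin_perm_bij: "fin_perm \<alpha> \<Longrightarrow> bij \<alpha>" unfolding fin_perm_def by blast

lemma fin_perm_comp:
  assumes "fin_perm \<beta>" "fin_perm \<alpha>" shows "fin_perm (\<beta> \<circ> \<alpha>)"
proof -
  have b: "bij \<beta>" "bij \<alpha>" using assms fin_perm_def by auto
  have "{s. (\<beta> \<circ> \<alpha>) s \<noteq> s} \<subseteq> {s. \<alpha> s \<noteq> s} \<union> \<alpha> -` {t. \<beta> t \<noteq> t}" by auto
  moreover have "finite (\<alpha> -` {t. \<beta> t \<noteq> t})"
    using assms(1) finite_vimageI[OF _ bij_is_inj[OF b(2)]] unfolding fin_perm_def by blast
  ultimately have "finite {s. (\<beta> \<circ> \<alpha>) s \<noteq> s}" using assms(2) unfolding fin_perm_def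
    by (meson finite_UnI finite_subset)
  then show ?thesis unfolding fin_perm_def using b bij_comp by blast
qed

lemma fin_perm_inv:
  assumes "fin_perm \<beta>" shows "fin_perm (inv \<beta>)"
proof -
  have b: "bij \<beta>" using assms fin_perm_def by auto
  have "{s. inv \<beta> s \<noteq> s} \<subseteq> \<beta> ` {s. \<beta> s \<noteq> s}"
  proof
    fix s assume "s \<in> {s. inv \<beta> s \<noteq> s}"
    then have "inv \<beta> s \<noteq> s" by simp
    moreover have "\<beta> (inv \<beta> s) = s" using b by (simp add: bij_is_surj surj_f_inv_f)
    ultimately show "s \<in> \<beta> ` {s. \<beta> s \<noteq> s}" by (metis (mono_tags, lifting) image_eqI mem_Collect_eq)
  qed
  then have "finite {s. inv \<beta> s \<noteq> s}" using assms unfolding fin_perm_def by (meson finite_imageI finite_subset)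
  then show ?thesis unfolding fin_perm_def using b bij_imp_bij_inv by blast
qed

lemma fin_perm_id: "fin_perm id" unfolding fin_perm_def by simp

lemma rename_rename: "rename_g \<alpha> (rename_g \<beta> G) = rename_g (\<beta> \<circ> \<alpha>) G"
  unfolding rename_g_def by (simp add: vimage_comp comp_assoc)

lemma rename_id: "rename_g id G = G"
  unfolding rename_g_def by simp

lemma rename_inv: "bij \<beta> \<Longrightarrow> rename_g \<beta> (rename_g (inv \<beta>) G) = G"
  using rename_rename rename_id by (metis bij_is_inj inv_o_cancel)

lemma restrict_restrict: "restrict_g \<tau> (restrict_g \<tau>0 P) = restrict_g (\<tau>0 \<inter> \<tau>) P"
  unfolding restrict_g_def by (simp add: Int_assoc)

lemma restrict_rename:
  assumes "bij \<beta>"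
  shows "rename_g \<alpha> (restrict_g \<tau> (rename_g \<beta> P)) = rename_g (\<beta> \<circ> \<alpha>) (restrict_g (\<beta> ` \<tau>) P)"
proof -
  have "(\<beta> \<circ> \<alpha>) -` (srt P \<inter> \<beta> ` \<tau>) = \<alpha> -` (\<beta> -` srt P \<inter> \<tau>)"
    using assms by (auto simp: bij_def inj_on_def) metis
  then show ?thesis unfolding rename_g_def restrict_g_def by (simp add: comp_assoc)
qed

lemma iso_wrap: "iso_graph K K' \<Longrightarrow> iso_graph (rename_g \<alpha> (restrict_g \<tau> K)) (rename_g \<alpha> (restrict_g \<tau> K'))"
  using iso_rename iso_restrict by blast

lemma wf_wrap: "wf_graph ar K \<Longrightarrow> fin_perm \<alpha> \<Longrightarrow> wf_graph ar (rename_g \<alpha> (restrict_g \<tau> K))"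
  using wf_rename wf_restrict fin_perm_bij by blast

definition EE :: "('a \<Rightarrow> nat) \<Rightarrow> 'a hgraph set set \<Rightarrow> 'a hgraph \<Rightarrow> 'a hgraph \<Rightarrow> bool" where
  "EE ar L X Y \<longleftrightarrow> wf_graph ar X \<and> wf_graph ar Y \<and> srt X = srt Y \<and>
     (\<forall>G \<alpha> \<tau>. wf_graph ar G \<longrightarrow> fin_perm \<alpha> \<longrightarrow> finite \<tau> \<longrightarrow>
        (cls ar (rename_g \<alpha> (restrict_g \<tau> (par_g X G))) \<in> L \<longleftrightarrow>
         cls ar (rename_g \<alpha> (restrict_g \<tau> (par_g Y G))) \<in> L))"

lemma EE_use:
  assumes "EE ar L X Y" "wf_graph ar G'" "fin_perm \<alpha>'" "finite \<tau>'"
    "iso_graph A (rename_g \<alpha>' (restrict_g \<tau>' (par_g X G')))"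
    "iso_graph B (rename_g \<alpha>' (restrict_g \<tau>' (par_g Y G')))"
    "wf_graph ar A" "wf_graph ar B"
  shows "cls ar A \<in> L \<longleftrightarrow> cls ar B \<in> L"
proof -
  have "cls ar A = cls ar (rename_g \<alpha>' (restrict_g \<tau>' (par_g X G')))" using cls_eq assms(5,7) by blast
  moreover have "cls ar B = cls ar (rename_g \<alpha>' (restrict_g \<tau>' (par_g Y G')))" using cls_eq assms(6,8) by blast
  ultimately show ?thesis using assms(1-4) unfolding EE_def by simp
qed

lemma EE_refl: "wf_graph ar X \<Longrightarrow> EE ar L X X" unfolding EE_def by simp

lemma EE_trans: "EE ar L X Y \<Longrightarrow> EE ar L Y Z \<Longrightarrow> EE ar L X Z" unfolding EE_def by simp

lemma EE_wf: "EE ar L X Y \<Longrightarrow> wf_graph ar X" "EE ar L X Y \<Longrightarrow> wf_graph ar Y" "EE ar L X Y \<Longrightarrow> srt X = srt Y"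
  unfolding EE_def by simp_all

lemma iso_assoc1:
  assumes "wf_graph ar X" "wf_graph ar H" "wf_graph ar G"
  shows "iso_graph (par_g (par_g X H) G) (par_g X (par_g H G))"
proof -
  note g = glue_assoc[OF assms glue2_par[OF assms(1) wf_par[OF assms(2,3)]] glue2_par[OF assms(2,3)]
          glue2_par[OF assms(1,2)]]
  show ?thesis by (rule glue2_iso[OF glue2_par[OF wf_par[OF assms(1,2)] assms(3)] g wf_par[OF assms(1,2)] assms(3)])
qed

lemma iso_assoc2:
  assumes "wf_graph ar X" "wf_graph ar H" "wf_graph ar G"
  shows "iso_graph (par_g (par_g H X) G) (par_g X (par_g H G))"
proof -
  note g = glue_assoc[OF assms glue2_par[OF assms(1) wf_par[OF assms(2,3)]] glue2_par[OF assms(2,3)]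
          glue2_sym[OF glue2_par[OF assms(2,1)]]]
  show ?thesis by (rule glue2_iso[OF glue2_par[OF wf_par[OF assms(2,1)] assms(3)] g wf_par[OF assms(2,1)] assms(3)])
qed

lemma EE_par1:
  assumes e: "EE ar L X Y" and h: "wf_graph ar H"
  shows "EE ar L (par_g X H) (par_g Y H)"
proof -
  note w = EE_wf[OF e]
  show ?thesis unfolding EE_def
  proof (intro conjI allI impI)
    show "wf_graph ar (par_g X H)" "wf_graph ar (par_g Y H)" using w h wf_par by blast+
    show "srt (par_g X H) = srt (par_g Y H)" using w(3) unfolding par_g_def by simp
    fix G :: "'a hgraph" and \<alpha> :: "nat \<Rightarrow> nat" and \<tau> :: "nat set" assume G: "wf_graph ar G" and a: "fin_perm \<alpha>" and t: "finite \<tau>"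
    show "cls ar (rename_g \<alpha> (restrict_g \<tau> (par_g (par_g X H) G))) \<in> L \<longleftrightarrow>
          cls ar (rename_g \<alpha> (restrict_g \<tau> (par_g (par_g Y H) G))) \<in> L"
    proof (rule EE_use[OF e wf_par[OF h G] a t])
      show "iso_graph (rename_g \<alpha> (restrict_g \<tau> (par_g (par_g X H) G))) (rename_g \<alpha> (restrict_g \<tau> (par_g X (par_g H G))))"
        by (rule iso_wrap[OF iso_assoc1[OF w(1) h G]])
      show "iso_graph (rename_g \<alpha> (restrict_g \<tau> (par_g (par_g Y H) G))) (rename_g \<alpha> (restrict_g \<tau> (par_g Y (par_g H G))))"
        by (rule iso_wrap[OF iso_assoc1[OF w(2) h G]])
      show "wf_graph ar (rename_g \<alpha> (restrict_g \<tau> (par_g (par_g X H) G)))"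
        by (rule wf_wrap[OF wf_par[OF wf_par[OF w(1) h] G] a])
      show "wf_graph ar (rename_g \<alpha> (restrict_g \<tau> (par_g (par_g Y H) G)))"
        by (rule wf_wrap[OF wf_par[OF wf_par[OF w(2) h] G] a])
    qed
  qed
qed

lemma EE_par2:
  assumes e: "EE ar L X Y" and h: "wf_graph ar H"
  shows "EE ar L (par_g H X) (par_g H Y)"
proof -
  note w = EE_wf[OF e]
  show ?thesis unfolding EE_def
  proof (intro conjI allI impI)
    show "wf_graph ar (par_g H X)" "wf_graph ar (par_g H Y)" using w h wf_par by blast+
    show "srt (par_g H X) = srt (par_g H Y)" using w(3) unfolding par_g_def by simp
    fix G :: "'a hgraph" and \<alpha> :: "nat \<Rightarrow> nat" and \<tau> :: "nat set" assume G: "wf_graph ar G" and a: "fin_perm \<alpha>" and t: "finite \<tau>"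
    show "cls ar (rename_g \<alpha> (restrict_g \<tau> (par_g (par_g H X) G))) \<in> L \<longleftrightarrow>
          cls ar (rename_g \<alpha> (restrict_g \<tau> (par_g (par_g H Y) G))) \<in> L"
    proof (rule EE_use[OF e wf_par[OF h G] a t])
      show "iso_graph (rename_g \<alpha> (restrict_g \<tau> (par_g (par_g H X) G))) (rename_g \<alpha> (restrict_g \<tau> (par_g X (par_g H G))))"
        by (rule iso_wrap[OF iso_assoc2[OF w(1) h G]])
      show "iso_graph (rename_g \<alpha> (restrict_g \<tau> (par_g (par_g H Y) G))) (rename_g \<alpha> (restrict_g \<tau> (par_g Y (par_g H G))))"
        by (rule iso_wrap[OF iso_assoc2[OF w(2) h G]])
      show "wf_graph ar (rename_g \<alpha> (restrict_g \<tau> (par_g (par_g H X) G)))"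
        by (rule wf_wrap[OF wf_par[OF wf_par[OF h w(1)] G] a])
      show "wf_graph ar (rename_g \<alpha> (restrict_g \<tau> (par_g (par_g H Y) G)))"
        by (rule wf_wrap[OF wf_par[OF wf_par[OF h w(2)] G] a])
    qed
  qed
qed



lemma EE_rename:
  assumes e: "EE ar L X Y" and b: "fin_perm \<beta>"
  shows "EE ar L (rename_g \<beta> X) (rename_g \<beta> Y)"
proof -
  note w = EE_wf[OF e]
  have bb: "bij \<beta>" using b fin_perm_bij by blast
  have bi: "bij (inv \<beta>)" using bb bij_imp_bij_inv by blast
  show ?thesis unfolding EE_def
  proof (intro conjI allI impI)
    show "wf_graph ar (rename_g \<beta> X)" "wf_graph ar (rename_g \<beta> Y)" using w bb wf_rename by blast+
    show "srt (rename_g \<beta> X) = srt (rename_g \<beta> Y)" using w(3) by simp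
    fix G :: "'a hgraph" and \<alpha> :: "nat \<Rightarrow> nat" and \<tau> :: "nat set"
    assume G: "wf_graph ar G" and a: "fin_perm \<alpha>" and t: "finite \<tau>"
    define G' where "G' = rename_g (inv \<beta>) G"
    have wG': "wf_graph ar G'" unfolding G'_def using wf_rename G bi by blast
    have I: "iso_graph (par_g (rename_g \<beta> Z) G) (rename_g \<beta> (par_g Z G'))" if wZ: "wf_graph ar Z" for Z
    proof -
      note glue2_rename[OF glue2_par[OF wZ wG'] bb]
      then have g: "glue2 (rename_g \<beta> Z) G (rename_g \<beta> (par_g Z G')) (\<lambda>v. 2*v) (par_vmap Z G') (\<lambda>e. 2*e) (\<lambda>e. 2*e+1)"
        unfolding G'_def by (simp only: rename_inv[OF bb])
      show ?thesis by (rule glue2_iso[OF glue2_par[OF wf_rename[OF wZ bb] G] g wf_rename[OF wZ bb] G])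
    qed
    have R: "rename_g \<alpha> (restrict_g \<tau> (rename_g \<beta> (par_g Z G'))) = rename_g (\<beta> \<circ> \<alpha>) (restrict_g (\<beta> ` \<tau>) (par_g Z G'))" for Z
      using restrict_rename[OF bb] by blast
    show "cls ar (rename_g \<alpha> (restrict_g \<tau> (par_g (rename_g \<beta> X) G))) \<in> L \<longleftrightarrow>
          cls ar (rename_g \<alpha> (restrict_g \<tau> (par_g (rename_g \<beta> Y) G))) \<in> L"
    proof (rule EE_use[OF e wG' fin_perm_comp[OF b a] finite_imageI[OF t]])
      show "iso_graph (rename_g \<alpha> (restrict_g \<tau> (par_g (rename_g \<beta> X) G))) (rename_g (\<beta> \<circ> \<alpha>) (restrict_g (\<beta> ` \<tau>) (par_g X G')))"
        using iso_wrap[OF I[OF w(1)], of \<alpha> \<tau>] by (simp only: R)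
      show "iso_graph (rename_g \<alpha> (restrict_g \<tau> (par_g (rename_g \<beta> Y) G))) (rename_g (\<beta> \<circ> \<alpha>) (restrict_g (\<beta> ` \<tau>) (par_g Y G')))"
        using iso_wrap[OF I[OF w(2)], of \<alpha> \<tau>] by (simp only: R)
      show "wf_graph ar (rename_g \<alpha> (restrict_g \<tau> (par_g (rename_g \<beta> X) G)))"
        by (rule wf_wrap[OF wf_par[OF wf_rename[OF w(1) bb] G] a])
      show "wf_graph ar (rename_g \<alpha> (restrict_g \<tau> (par_g (rename_g \<beta> Y) G)))"
        by (rule wf_wrap[OF wf_par[OF wf_rename[OF w(2) bb] G] a])
    qed
  qed
qed

lemma swap_perm:
  fixes S T D :: "nat set"
  assumes fS: "finite S" and fT: "finite T" and D: "D \<subseteq> T"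
  obtains \<beta> where "fin_perm \<beta>" "\<And>s. \<beta> (\<beta> s) = s" "\<And>s. s \<in> S \<union> T \<Longrightarrow> s \<notin> D \<Longrightarrow> \<beta> s = s"
    "\<And>s. s \<in> D \<Longrightarrow> \<beta> s \<notin> S \<union> T"
proof -
  define N where "N = Suc (Max (insert 0 (S \<union> T)))"
  have lt: "s < N" if "s \<in> S \<union> T" for s
    unfolding N_def using fS fT that by (simp add: le_imp_less_Suc)
  define \<beta> where "\<beta> s = (if s \<in> D then s + N else if N \<le> s \<and> s - N \<in> D then s - N else s)" for s
  have inv: "\<beta> (\<beta> s) = s" for s
  proof (cases "s \<in> D")
    case True
    have "s + N \<notin> D"
    proof
      assume "s + N \<in> D" then have "s + N < N" using lt D by blast
      then show False by simp
    qed
    then show ?thesis using True unfolding \<beta>_def by simp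
  next
    case False
    show ?thesis
    proof (cases "N \<le> s \<and> s - N \<in> D")
      case True then show ?thesis using False unfolding \<beta>_def by simp
    next
      case False2: False then show ?thesis using False unfolding \<beta>_def by auto
    qed
  qed
  have bb: "\<beta> \<circ> \<beta> = id" using inv by (simp add: fun_eq_iff)
  have bij: "bij \<beta>" using o_bij[OF bb bb] .
  have "{s. \<beta> s \<noteq> s} \<subseteq> D \<union> (\<lambda>d. d + N) ` D"
  proof
    fix s assume "s \<in> {s. \<beta> s \<noteq> s}"
    then have "s \<in> D \<or> (N \<le> s \<and> s - N \<in> D)" unfolding \<beta>_def by (auto split: if_splits)
    then show "s \<in> D \<union> (\<lambda>d. d + N) ` D" by (auto simp: image_iff) (metis le_add_diff_inverse2)
  qed
  moreover have "finite D" using D fT finite_subset by blast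
  ultimately have "finite {s. \<beta> s \<noteq> s}" by (meson finite_UnI finite_imageI finite_subset)
  then have fp: "fin_perm \<beta>" unfolding fin_perm_def using bij by blast
  have fx: "\<beta> s = s" if "s \<in> S \<union> T" "s \<notin> D" for s
    using that lt[OF that(1)] unfolding \<beta>_def by auto
  have mv: "\<beta> s \<notin> S \<union> T" if "s \<in> D" for s
  proof
    assume "\<beta> s \<in> S \<union> T"
    moreover have "\<beta> s = s + N" using that unfolding \<beta>_def by simp
    ultimately have "s + N < N" using lt[of "s + N"] by metis
    then show False by simp
  qed
  show ?thesis using that fp inv fx mv by blast
qed

lemma EE_restrict:
  assumes e: "EE ar L X Y" and fs: "finite \<sigma>"
  shows "EE ar L (restrict_g \<sigma> X) (restrict_g \<sigma> Y)"
proof -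
  note w = EE_wf[OF e]
  show ?thesis unfolding EE_def
  proof (intro conjI allI impI)
    show "wf_graph ar (restrict_g \<sigma> X)" "wf_graph ar (restrict_g \<sigma> Y)" using w wf_restrict by blast+
    show "srt (restrict_g \<sigma> X) = srt (restrict_g \<sigma> Y)" using w(3) by simp
    fix G :: "'a hgraph" and \<alpha> :: "nat \<Rightarrow> nat" and \<tau> :: "nat set"
    assume G: "wf_graph ar G" and a: "fin_perm \<alpha>" and t: "finite \<tau>"
    obtain \<beta> where b: "fin_perm \<beta>" and inv: "\<And>s. \<beta> (\<beta> s) = s"
      and fx: "\<And>s. s \<in> srt X \<union> srt G \<Longrightarrow> s \<notin> srt G - \<sigma> \<Longrightarrow> \<beta> s = s"
      and mv: "\<And>s. s \<in> srt G - \<sigma> \<Longrightarrow> \<beta> s \<notin> srt X \<union> srt G"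
      using swap_perm[of "srt X" "srt G" "srt G - \<sigma>"] wfD(5)[OF w(1)] wfD(5)[OF G] by blast
    have bb: "bij \<beta>" using b fin_perm_bij by blast
    define G' where "G' = rename_g \<beta> G"
    have wG': "wf_graph ar G'" unfolding G'_def using wf_rename G bb by blast
    define \<tau>0 where "\<tau>0 = (srt X \<inter> \<sigma>) \<union> \<beta> -` srt G"
    have ft0: "finite \<tau>0" unfolding \<tau>0_def using wfD(5)[OF w(1)] wfD(5)[OF G]
      finite_vimageI[OF _ bij_is_inj[OF bb]] by blast
    have I: "iso_graph (par_g (restrict_g \<sigma> Z) G) (rename_g \<beta> (restrict_g \<tau>0 (par_g Z G')))"
      if wZ: "wf_graph ar Z" and sZ: "srt Z = srt X" for Z
    proof -
      have fx': "\<beta> s = s" if "s \<in> srt Z" "s \<in> \<sigma>" for s using fx that sZ by blast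
      have cnd: "\<beta> s \<in> srt G \<longleftrightarrow> s \<in> \<sigma> \<and> s \<in> srt G" if "s \<in> srt Z" for s
      proof (cases "s \<in> srt G - \<sigma>")
        case True then show ?thesis using mv by blast
      next
        case False then show ?thesis using fx that sZ by auto
      qed
      have g: "glue2 (restrict_g \<sigma> Z) G (rename_g \<beta> (restrict_g \<tau>0 (par_g Z G'))) (\<lambda>v. 2*v) (par_vmap Z G') (\<lambda>e. 2*e) (\<lambda>e. 2*e+1)"
        unfolding \<tau>0_def using glue2_restr[OF glue2_par[OF wZ wG'[unfolded G'_def]] inv fx' cnd] sZ
        unfolding G'_def by simp
      show ?thesis by (rule glue2_iso[OF glue2_par[OF wf_restrict[OF wZ] G] g wf_restrict[OF wZ] G])
    qed
    have R: "rename_g \<alpha> (restrict_g \<tau> (rename_g \<beta> (restrict_g \<tau>0 (par_g Z G')))) = rename_g (\<beta> \<circ> \<alpha>) (restrict_g (\<tau>0 \<inter> \<beta> ` \<tau>) (par_g Z G'))" for Z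
      by (simp add: restrict_rename[OF bb] restrict_restrict)
    show "cls ar (rename_g \<alpha> (restrict_g \<tau> (par_g (restrict_g \<sigma> X) G))) \<in> L \<longleftrightarrow>
          cls ar (rename_g \<alpha> (restrict_g \<tau> (par_g (restrict_g \<sigma> Y) G))) \<in> L"
    proof (rule EE_use[OF e wG' fin_perm_comp[OF b a]])
      show "finite (\<tau>0 \<inter> \<beta> ` \<tau>)" using ft0 by blast
      show "iso_graph (rename_g \<alpha> (restrict_g \<tau> (par_g (restrict_g \<sigma> X) G))) (rename_g (\<beta> \<circ> \<alpha>) (restrict_g (\<tau>0 \<inter> \<beta> ` \<tau>) (par_g X G')))"
        using iso_wrap[OF I[OF w(1)], of \<alpha> \<tau>] by (simp only: R)
      show "iso_graph (rename_g \<alpha> (restrict_g \<tau> (par_g (restrict_g \<sigma> Y) G))) (rename_g (\<beta> \<circ> \<alpha>) (restrict_g (\<tau>0 \<inter> \<beta> ` \<tau>) (par_g Y G')))"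
        using iso_wrap[OF I[OF w(2) w(3)[symmetric]], of \<alpha> \<tau>] by (simp only: R)
      show "wf_graph ar (rename_g \<alpha> (restrict_g \<tau> (par_g (restrict_g \<sigma> X) G)))"
        by (rule wf_wrap[OF wf_par[OF wf_restrict[OF w(1)] G] a])
      show "wf_graph ar (rename_g \<alpha> (restrict_g \<tau> (par_g (restrict_g \<sigma> Y) G)))"
        by (rule wf_wrap[OF wf_par[OF wf_restrict[OF w(2)] G] a])
    qed
  qed
qed

lemma EE_final:
  assumes e: "EE ar L X Y"
  shows "cls ar X \<in> L \<longleftrightarrow> cls ar Y \<in> L"
proof -
  note w = EE_wf[OF e]
  have z: "wf_graph ar (zero_g {})" using wf_zero by blast
  have c: "cls ar Z = cls ar (rename_g id (restrict_g (srt Z) (par_g Z (zero_g {}))))" if wZ: "wf_graph ar Z" for Z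
  proof -
    have g: "glue2 Z (zero_g {}) Z id id id id"
      unfolding glue2_def zero_g_def by simp
    have "iso_graph (par_g Z (zero_g {})) Z"
      by (rule glue2_iso[OF glue2_par[OF wZ z] g wZ z])
    then have "cls ar (par_g Z (zero_g {})) = cls ar Z" using cls_eq wf_par[OF wZ z] by blast
    moreover have "restrict_g (srt Z) (par_g Z (zero_g {})) = par_g Z (zero_g {})"
      unfolding restrict_g_def par_g_def zero_g_def by simp
    ultimately show ?thesis by (simp add: rename_id)
  qed
  have "cls ar (rename_g id (restrict_g (srt X) (par_g X (zero_g {})))) \<in> L \<longleftrightarrow>
        cls ar (rename_g id (restrict_g (srt X) (par_g Y (zero_g {})))) \<in> L"
    using e z fin_perm_id wfD(5)[OF w(1)] unfolding EE_def by blast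
  then show ?thesis using c[OF w(1)] c[OF w(2)] w(3) by simp
qed

lemma eval_EE:
  assumes "wf_term ar t" and r: "\<And>i. EE ar L (\<rho> i) (\<rho>' i)"
  shows "EE ar L (eval_term \<rho> t) (eval_term \<rho>' t)"
  using assms(1)
proof (induction t)
  case (Var i) then show ?case using r by simp
next
  case (Zero \<tau>)
  then have "wf_graph ar (zero_g \<tau>)" using wf_zero by simp
  then show ?case by (simp add: EE_refl)
next
  case (Edge a ss)
  then have "wf_graph ar (edge_g a ss)" using wf_edge by simp
  then show ?case by (simp add: EE_refl)
next
  case (Restrict \<tau> t)
  then have "EE ar L (eval_term \<rho> t) (eval_term \<rho>' t)" "finite \<tau>" by simp_all
  then show ?case using EE_restrict by (simp only: eval_term.simps)
next
  case (Rename \<alpha> t)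
  then have "EE ar L (eval_term \<rho> t) (eval_term \<rho>' t)" "fin_perm \<alpha>" by simp_all
  then show ?case using EE_rename by (simp only: eval_term.simps)
next
  case (Par t u)
  then have 1: "EE ar L (eval_term \<rho> t) (eval_term \<rho>' t)" and 2: "EE ar L (eval_term \<rho> u) (eval_term \<rho>' u)"
    by simp_all
  have "EE ar L (par_g (eval_term \<rho> t) (eval_term \<rho> u)) (par_g (eval_term \<rho>' t) (eval_term \<rho> u))"
    using EE_par1[OF 1 EE_wf(1)[OF 2]] .
  moreover have "EE ar L (par_g (eval_term \<rho>' t) (eval_term \<rho> u)) (par_g (eval_term \<rho>' t) (eval_term \<rho>' u))"
    using EE_par2[OF 2 EE_wf(2)[OF 1]] .
  ultimately show ?case using EE_trans by (simp only: eval_term.simps)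
qed

theorem lemma7p1:
  fixes ar :: "'a \<Rightarrow> nat" and L :: "'a hgraph set set" and G1 G2 :: "'a hgraph"
  assumes "wf_graph ar G1" and "wf_graph ar G2"
  shows "synt_cong ar L G1 G2 \<longleftrightarrow>
           srt G1 = srt G2 \<and>
           (\<forall>G \<alpha> \<tau>. wf_graph ar G \<longrightarrow> fin_perm \<alpha> \<longrightarrow> finite \<tau> \<longrightarrow>
              (cls ar (rename_g \<alpha> (restrict_g \<tau> (par_g G1 G))) \<in> L \<longleftrightarrow>
               cls ar (rename_g \<alpha> (restrict_g \<tau> (par_g G2 G))) \<in> L))"
proof
  assume s: "synt_cong ar L G1 G2"
  show "srt G1 = srt G2 \<and>
           (\<forall>G \<alpha> \<tau>. wf_graph ar G \<longrightarrow> fin_perm \<alpha> \<longrightarrow> finite \<tau> \<longrightarrow>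
              (cls ar (rename_g \<alpha> (restrict_g \<tau> (par_g G1 G))) \<in> L \<longleftrightarrow>
               cls ar (rename_g \<alpha> (restrict_g \<tau> (par_g G2 G))) \<in> L))"
  proof (intro conjI allI impI)
    show "srt G1 = srt G2" using s unfolding synt_cong_def by simp
    fix G :: "'a hgraph" and \<alpha> :: "nat \<Rightarrow> nat" and \<tau> :: "nat set"
    assume G: "wf_graph ar G" and a: "fin_perm \<alpha>" and t: "finite \<tau>"
    let ?t = "Rename \<alpha> (Restrict \<tau> (Par (Var 0) (Var 1)))"
    have wt: "wf_term ar ?t" using a t by simp
    have A: "\<And>t \<rho>. wf_term ar t \<Longrightarrow> (\<forall>i. wf_graph ar (\<rho> i)) \<Longrightarrow>
       (cls ar (eval_term (\<rho>(0 := G1)) t) \<in> L \<longleftrightarrow> cls ar (eval_term (\<rho>(0 := G2)) t) \<in> L)"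
      using s unfolding synt_cong_def by blast
    have "cls ar (eval_term ((\<lambda>_. G)(0 := G1)) ?t) \<in> L \<longleftrightarrow> cls ar (eval_term ((\<lambda>_. G)(0 := G2)) ?t) \<in> L"
      by (rule A[OF wt]) (simp add: G)
    then show "cls ar (rename_g \<alpha> (restrict_g \<tau> (par_g G1 G))) \<in> L \<longleftrightarrow>
               cls ar (rename_g \<alpha> (restrict_g \<tau> (par_g G2 G))) \<in> L" by simp
  qed
next
  assume r: "srt G1 = srt G2 \<and>
           (\<forall>G \<alpha> \<tau>. wf_graph ar G \<longrightarrow> fin_perm \<alpha> \<longrightarrow> finite \<tau> \<longrightarrow>
              (cls ar (rename_g \<alpha> (restrict_g \<tau> (par_g G1 G))) \<in> L \<longleftrightarrow>
               cls ar (rename_g \<alpha> (restrict_g \<tau> (par_g G2 G))) \<in> L))"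
  then have e: "EE ar L G1 G2" unfolding EE_def using assms by blast
  show "synt_cong ar L G1 G2" unfolding synt_cong_def
  proof (intro conjI allI impI)
    show "srt G1 = srt G2" using r by blast
    fix t :: "'a hrterm" and \<rho> :: "nat \<Rightarrow> 'a hgraph" assume t: "wf_term ar t" and \<rho>: "\<forall>i. wf_graph ar (\<rho> i)"
    have "EE ar L ((\<rho>(0 := G1)) i) ((\<rho>(0 := G2)) i)" for i
      using e \<rho> EE_refl by (cases "i = 0") auto
    then show "cls ar (eval_term (\<rho>(0 := G1)) t) \<in> L \<longleftrightarrow> cls ar (eval_term (\<rho>(0 := G2)) t) \<in> L"
      using EE_final eval_EE[OF t] by metis
  qed
qed

end
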